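(* Let $\mathcal{M}=(E,\mathcal{I})$ be a matroid with rank function $r_{\mathcal{M}}$ and $E=\{e_1,\dots,e_n\}$, let $E_0$ be its set of loops, and let $E_1,\dots,E_k$ and $r_1,\dots,r_k$ be the ground sets and ranks of the principal minors of $\mathcal{M}\setminus E_0$. Let $\mathcal{P}$ be the partition matroid on $E$, with rank function $r_{\mathcal{P}}$, whose independent sets are the sets $\bigcup_{i=1}^k I_i$ with $I_i\subseteq E_i$ and $|I_i|\leq r_i$. Let $\sigma$ be a uniformly random permutation of $[n]$ and for $1\leq j\leq n$ let $A^\sigma_j=\{e_{\sigma(1)},\dots,e_{\sigma(j)}\}$. Then for every $1\leq j\leq n$, $$\mathbb{E}_\sigma[r_{\mathcal{P}}(A^\sigma_j)]\geq(1-1/e)\,\mathbb{E}_\sigma[r_{\mathcal{M}}(A^\sigma_j)].$$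
   Context: Principal sequence: for a loopless matroid $\mathcal{N}$ on ground set $S$ with rank function $r$, there are unique sets $\emptyset=F_0\subsetneq F_1\subsetneq\dots\subsetneq F_k=S$ and values $\infty>\lambda_1>\dots>\lambda_k\geq 1$ such that $\lambda_1,\dots,\lambda_k$ are exactly the values $\lambda$ for which $f_\lambda(X)=\lambda r(X)-|X|$ ($X\subseteq S$) has more than one minimizer, and the unique minimal and maximal minimizers of $f_{\lambda_i}$ are $F_{i-1}$ and $F_i$. The principal minors are $\mathcal{M}_i=(\mathcal{N}/F_{i-1})|_{E_i}$ with ground set $E_i=F_i\setminus F_{i-1}$ and rank $r_i$. *)

theory Defs
  imports "HOL-Probability.Probability" "HOL-Combinatorics.Permutations"
begin

definition matroid :: "'a set \<Rightarrow> 'a set set \<Rightarrow> bool" where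
  "matroid E I \<longleftrightarrow> finite E \<and> (\<forall>X\<in>I. X \<subseteq> E) \<and> {} \<in> I \<and>
     (\<forall>X Y. X \<in> I \<and> Y \<subseteq> X \<longrightarrow> Y \<in> I) \<and>
     (\<forall>X Y. X \<in> I \<and> Y \<in> I \<and> card X < card Y \<longrightarrow> (\<exists>x\<in>Y - X. insert x X \<in> I))"

definition rk :: "'a set set \<Rightarrow> 'a set \<Rightarrow> nat" where
  "rk I X = Max {card Y | Y. Y \<subseteq> X \<and> Y \<in> I}"

definition loops :: "'a set \<Rightarrow> 'a set set \<Rightarrow> 'a set" where
  "loops E I = {x\<in>E. {x} \<notin> I}"

definition restrict_matroid :: "'a set set \<Rightarrow> 'a set \<Rightarrow> 'a set set" where
  "restrict_matroid I S = {X\<in>I. X \<subseteq> S}"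

definition flam :: "'a set set \<Rightarrow> real \<Rightarrow> 'a set \<Rightarrow> real" where
  "flam N lam X = lam * real (rk N X) - real (card X)"

definition minimizers :: "'a set set \<Rightarrow> 'a set \<Rightarrow> real \<Rightarrow> 'a set set" where
  "minimizers N S lam = {X. X \<subseteq> S \<and> (\<forall>Y. Y \<subseteq> S \<longrightarrow> flam N lam X \<le> flam N lam Y)}"

definition principal_sequence ::
  "'a set set \<Rightarrow> 'a set \<Rightarrow> nat \<Rightarrow> (nat \<Rightarrow> 'a set) \<Rightarrow> (nat \<Rightarrow> real) \<Rightarrow> bool" where
  "principal_sequence N S k F lam \<longleftrightarrow>
     F 0 = {} \<and> F k = S \<and> (\<forall>i<k. F i \<subset> F (Suc i)) \<and>
     (\<forall>i. 1 \<le> i \<and> i < k \<longrightarrow> lam (Suc i) < lam i) \<and>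
     (1 \<le> k \<longrightarrow> 1 \<le> lam k) \<and>
     {l. \<exists>X Y. X \<noteq> Y \<and> X \<in> minimizers N S l \<and> Y \<in> minimizers N S l} = lam ` {1..k} \<and>
     (\<forall>i\<in>{1..k}.
        F (i - 1) \<in> minimizers N S (lam i) \<and> (\<forall>X\<in>minimizers N S (lam i). F (i - 1) \<subseteq> X) \<and>
        F i \<in> minimizers N S (lam i) \<and> (\<forall>X\<in>minimizers N S (lam i). X \<subseteq> F i))"

definition contract_rk :: "'a set set \<Rightarrow> 'a set \<Rightarrow> 'a set \<Rightarrow> nat" where
  "contract_rk N F X = rk N (X \<union> F) - rk N F"

text \<open>Ground set E_i and rank r_i of the i-th principal minor (N/F_{i-1})|E_i.\<close>
definition minor_ground :: "(nat \<Rightarrow> 'a set) \<Rightarrow> nat \<Rightarrow> 'a set" where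
  "minor_ground F i = F i - F (i - 1)"

definition minor_rank :: "'a set set \<Rightarrow> (nat \<Rightarrow> 'a set) \<Rightarrow> nat \<Rightarrow> nat" where
  "minor_rank N F i = contract_rk N (F (i - 1)) (minor_ground F i)"

definition partition_indep :: "nat \<Rightarrow> (nat \<Rightarrow> 'a set) \<Rightarrow> (nat \<Rightarrow> nat) \<Rightarrow> 'a set set" where
  "partition_indep k Es rs =
     {X. \<exists>Is. (\<forall>i\<in>{1..k}. Is i \<subseteq> Es i \<and> card (Is i) \<le> rs i) \<and> X = (\<Union>i\<in>{1..k}. Is i)}"

end

theory Submission
  imports Defs
begin

lemma swap_sum:
  fixes \<phi> :: "(nat \<Rightarrow> nat) \<Rightarrow> real"
  assumes "a \<in> {1..n}" "b \<in> {1..n}"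
  shows "(\<Sum>\<sigma>\<in>{\<sigma>. \<sigma> permutes {1..n}}. \<phi> (\<sigma> \<circ> Transposition.transpose a b)) = (\<Sum>\<sigma>\<in>{\<sigma>. \<sigma> permutes {1..n}}. \<phi> \<sigma>)"
proof (rule sum.reindex_bij_witness[where i = "\<lambda>\<sigma>. \<sigma> \<circ> Transposition.transpose a b" and j = "\<lambda>\<sigma>. \<sigma> \<circ> Transposition.transpose a b"])
  have t: "Transposition.transpose a b permutes {1..n}" using assms by (rule permutes_swap_id)
  show "\<And>s. s \<in> {\<sigma>. \<sigma> permutes {1..n}} \<Longrightarrow> s \<circ> Transposition.transpose a b \<circ> Transposition.transpose a b = s"
    by (simp add: comp_assoc)
  show "\<And>s. s \<in> {\<sigma>. \<sigma> permutes {1..n}} \<Longrightarrow> s \<circ> Transposition.transpose a b \<in> {\<sigma>. \<sigma> permutes {1..n}}"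
    using t by (auto intro: permutes_compose)
  show "\<And>s. s \<in> {\<sigma>. \<sigma> permutes {1..n}} \<Longrightarrow> s \<circ> Transposition.transpose a b \<circ> Transposition.transpose a b = s"
    by (simp add: comp_assoc)
  show "\<And>s. s \<in> {\<sigma>. \<sigma> permutes {1..n}} \<Longrightarrow> s \<circ> Transposition.transpose a b \<in> {\<sigma>. \<sigma> permutes {1..n}}"
    using t by (auto intro: permutes_compose)
qed simp

lemma card_img_sum:
  assumes "inj_on \<sigma> T" "finite T"
  shows "card (\<sigma> ` T \<inter> B) = (\<Sum>s\<in>T. if \<sigma> s \<in> B then 1 else 0)"
proof -
  have "\<sigma> ` T \<inter> B = \<sigma> ` {s\<in>T. \<sigma> s \<in> B}" by auto
  moreover have "inj_on \<sigma> {s\<in>T. \<sigma> s \<in> B}" using assms(1) by (rule inj_on_subset) auto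
  ultimately have "card (\<sigma> ` T \<inter> B) = card {s\<in>T. \<sigma> s \<in> B}" by (simp add: card_image)
  also have "\<dots> = (\<Sum>s\<in>{s\<in>T. \<sigma> s \<in> B}. 1)" by simp
  also have "\<dots> = (\<Sum>s\<in>T. if \<sigma> s \<in> B then 1 else 0)"
    using assms(2) by (rule sum.inter_filter)
  finally show ?thesis .
qed

lemma count_split:
  assumes "\<sigma> permutes {1..n}" "j \<le> n" "B \<subseteq> {1..n}"
  shows "card (\<sigma> ` {1..j} \<inter> B) + card (\<sigma> ` {Suc j..n} \<inter> B) = card B"
proof -
  have inj: "inj_on \<sigma> {1..n}" using assms(1) permutes_inj_on by blast
  have d: "(\<sigma> ` {1..j} \<inter> B) \<inter> (\<sigma> ` {Suc j..n} \<inter> B) = {}"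
  proof -
    have "\<sigma> ` {1..j} \<inter> \<sigma> ` {Suc j..n} = \<sigma> ` ({1..j} \<inter> {Suc j..n})"
      using inj assms(2) by (intro inj_on_image_Int[symmetric]) auto
    then show ?thesis by auto
  qed
  have u: "(\<sigma> ` {1..j} \<inter> B) \<union> (\<sigma> ` {Suc j..n} \<inter> B) = B"
  proof -
    have "{1..j} \<union> {Suc j..n} = {1..n}" using assms(2) by auto
    then have "\<sigma> ` {1..j} \<union> \<sigma> ` {Suc j..n} = {1..n}"
      using permutes_image[OF assms(1)] by (metis image_Un)
    then show ?thesis using assms(3) by auto
  qed
  have "card ((\<sigma> ` {1..j} \<inter> B) \<union> (\<sigma> ` {Suc j..n} \<inter> B)) = card (\<sigma> ` {1..j} \<inter> B) + card (\<sigma> ` {Suc j..n} \<inter> B)"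
    by (rule card_Un_disjoint[OF _ _ d]) simp_all
  from this[unfolded u] show ?thesis by (rule sym)
qed

lemma X_Suc:
  assumes "\<sigma> permutes {1..n}" "j < n"
  shows "card (\<sigma> ` {1..Suc j} \<inter> B) = card (\<sigma> ` {1..j} \<inter> B) + (if \<sigma> (Suc j) \<in> B then 1 else 0)"
proof -
  have inj: "inj_on \<sigma> {1..n}" using assms(1) permutes_inj_on by blast
  have "{1..Suc j} \<subseteq> {1..n}" using assms(2) by auto
  then have "inj_on \<sigma> {1..Suc j}" using inj inj_on_subset by blast
  then have "card (\<sigma> ` {1..Suc j} \<inter> B) = (\<Sum>s\<in>{1..Suc j}. if \<sigma> s \<in> B then 1 else 0)"
    by (rule card_img_sum) simp
  also have "\<dots> = (\<Sum>s\<in>{1..j}. if \<sigma> s \<in> B then 1 else 0) + (if \<sigma> (Suc j) \<in> B then 1 else 0)"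
    by simp
  also have "(\<Sum>s\<in>{1..j}. if \<sigma> s \<in> B then 1 else 0) = card (\<sigma> ` {1..j} \<inter> B)"
    using inj assms(2) by (intro card_img_sum[symmetric]) (auto intro: inj_on_subset)
  finally show ?thesis .
qed

lemma exch:
  fixes h :: "nat set \<Rightarrow> real"
  assumes "j < n"
  shows "(\<Sum>\<sigma>\<in>{\<sigma>. \<sigma> permutes {1..n}}. h (\<sigma> ` {1..j}) * (if \<sigma> (Suc j) \<in> B then 1 else 0)) * real (n - j)
    = (\<Sum>\<sigma>\<in>{\<sigma>. \<sigma> permutes {1..n}}. h (\<sigma> ` {1..j}) * real (card (\<sigma> ` {Suc j..n} \<inter> B)))"
proof -
  let ?P = "{\<sigma>. \<sigma> permutes {1..n}}"
  have each: "(\<Sum>\<sigma>\<in>?P. h (\<sigma> ` {1..j}) * (if \<sigma> t \<in> B then 1 else 0))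
      = (\<Sum>\<sigma>\<in>?P. h (\<sigma> ` {1..j}) * (if \<sigma> (Suc j) \<in> B then 1 else 0))" if t: "t \<in> {Suc j..n}" for t
  proof -
    let ?\<tau> = "Transposition.transpose (Suc j) t"
    have s1: "(\<Sum>\<sigma>\<in>?P. (\<lambda>\<sigma>. h (\<sigma> ` {1..j}) * (if \<sigma> (Suc j) \<in> B then 1 else 0)) (\<sigma> \<circ> ?\<tau>))
       = (\<Sum>\<sigma>\<in>?P. h (\<sigma> ` {1..j}) * (if \<sigma> (Suc j) \<in> B then 1 else 0))"
      using t assms by (intro swap_sum) auto
    have s2: "h (\<sigma> ` {1..j}) * (if \<sigma> t \<in> B then 1 else 0) =
        (\<lambda>\<sigma>. h (\<sigma> ` {1..j}) * (if \<sigma> (Suc j) \<in> B then 1 else 0)) (\<sigma> \<circ> ?\<tau>)" for \<sigma>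
    proof -
      have fx: "\<And>x. x \<in> {1..j} \<Longrightarrow> ?\<tau> x = id x" using t by auto
      have "?\<tau> ` {1..j} = id ` {1..j}" by (rule image_cong[OF refl fx])
      then have "?\<tau> ` {1..j} = {1..j}" by simp
      then have "(\<sigma> \<circ> ?\<tau>) ` {1..j} = \<sigma> ` {1..j}" by (metis image_comp)
      then show ?thesis by simp
    qed
    have "(\<Sum>\<sigma>\<in>?P. h (\<sigma> ` {1..j}) * (if \<sigma> t \<in> B then 1 else 0)) =
        (\<Sum>\<sigma>\<in>?P. (\<lambda>\<sigma>. h (\<sigma> ` {1..j}) * (if \<sigma> (Suc j) \<in> B then 1 else 0)) (\<sigma> \<circ> ?\<tau>))"
      by (rule sum.cong[OF refl]) (rule s2)
    also note s1
    finally show ?thesis .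
  qed
  have "(\<Sum>\<sigma>\<in>?P. h (\<sigma> ` {1..j}) * real (card (\<sigma> ` {Suc j..n} \<inter> B)))
      = (\<Sum>\<sigma>\<in>?P. \<Sum>t\<in>{Suc j..n}. h (\<sigma> ` {1..j}) * (if \<sigma> t \<in> B then 1 else 0))"
  proof (rule sum.cong[OF refl])
    fix \<sigma> assume "\<sigma> \<in> ?P"
    then have "inj_on \<sigma> {Suc j..n}" using permutes_inj_on by (blast intro: inj_on_subset)
    then have "card (\<sigma> ` {Suc j..n} \<inter> B) = (\<Sum>t\<in>{Suc j..n}. if \<sigma> t \<in> B then 1 else 0)"
      by (rule card_img_sum) simp
    then have "real (card (\<sigma> ` {Suc j..n} \<inter> B)) = (\<Sum>t\<in>{Suc j..n}. if \<sigma> t \<in> B then 1 else (0::real))"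
    proof -
      assume c: "card (\<sigma> ` {Suc j..n} \<inter> B) = (\<Sum>t\<in>{Suc j..n}. if \<sigma> t \<in> B then 1 else 0)"
      have "real (card (\<sigma> ` {Suc j..n} \<inter> B)) = (\<Sum>t\<in>{Suc j..n}. real (if \<sigma> t \<in> B then 1 else 0))"
        unfolding c by (rule of_nat_sum)
      also have "\<dots> = (\<Sum>t\<in>{Suc j..n}. if \<sigma> t \<in> B then 1 else (0::real))"
        by (intro sum.cong) auto
      finally show ?thesis .
    qed
    then show "h (\<sigma> ` {1..j}) * real (card (\<sigma> ` {Suc j..n} \<inter> B))
        = (\<Sum>t\<in>{Suc j..n}. h (\<sigma> ` {1..j}) * (if \<sigma> t \<in> B then 1 else 0))"
      by (simp add: sum_distrib_left)
  qed
  also have "\<dots> = (\<Sum>t\<in>{Suc j..n}. \<Sum>\<sigma>\<in>?P. h (\<sigma> ` {1..j}) * (if \<sigma> t \<in> B then 1 else 0))"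
    by (rule sum.swap)
  also have "\<dots> = (\<Sum>t\<in>{Suc j..n}. \<Sum>\<sigma>\<in>?P. h (\<sigma> ` {1..j}) * (if \<sigma> (Suc j) \<in> B then 1 else 0))"
    using each by (rule sum.cong[OF refl])
  also have "\<dots> = (\<Sum>\<sigma>\<in>?P. h (\<sigma> ` {1..j}) * (if \<sigma> (Suc j) \<in> B then 1 else 0)) * real (n - j)"
    by simp
  finally show ?thesis by simp
qed

lemma exp_bound:
  fixes x :: real
  assumes "0 \<le> x"
  shows "(1 - 1 / exp 1) * min x 1 \<le> 1 - exp (- x)"
proof (cases "x \<le> 1")
  case True
  have "exp ((1 - x) *\<^sub>R 0 + x *\<^sub>R (-1)) \<le> (1 - x) * exp 0 + x * exp (-1)"
    using convex_onD[OF exp_convex, of x 0 "-1"] assms True by simp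
  then have "exp (- x) \<le> 1 - x + x * exp (-1)" by simp
  then show ?thesis using True by (simp add: exp_minus field_simps)
next
  case False
  have "exp (- x) \<le> exp (-1)" using False by simp
  then show ?thesis using False by (simp add: exp_minus field_simps)
qed

lemma sum_ind:
  assumes "B \<subseteq> {1..n}" "s \<in> {1..n}"
  shows "(\<Sum>\<sigma>\<in>{\<sigma>. \<sigma> permutes {1..n}}. if \<sigma> s \<in> B then 1 else 0) * real n
     = real (card {\<sigma>. \<sigma> permutes {1..n}}) * real (card B)"
proof -
  let ?P = "{\<sigma>. \<sigma> permutes {1..n}}"
  have n: "0 < n" using assms(2) by auto
  have e: "(\<Sum>\<sigma>\<in>?P. (\<lambda>_. 1::real) (\<sigma> ` {1..0}) * (if \<sigma> (Suc 0) \<in> B then 1 else 0)) * real (n - 0)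
    = (\<Sum>\<sigma>\<in>?P. (\<lambda>_. 1::real) (\<sigma> ` {1..0}) * real (card (\<sigma> ` {Suc 0..n} \<inter> B)))"
    using n by (rule exch)
  have "\<sigma> ` {Suc 0..n} \<inter> B = B" if "\<sigma> \<in> ?P" for \<sigma>
    using permutes_image[of \<sigma> "{1..n}"] that assms(1) by auto
  then have r: "(\<Sum>\<sigma>\<in>?P. (\<lambda>_. 1::real) (\<sigma> ` {1..0}) * real (card (\<sigma> ` {Suc 0..n} \<inter> B)))
     = real (card ?P) * real (card B)" by simp
  have sw: "(\<Sum>\<sigma>\<in>?P. (\<lambda>\<sigma>. if \<sigma> (Suc 0) \<in> B then 1 else (0::real)) (\<sigma> \<circ> Transposition.transpose (Suc 0) s))
     = (\<Sum>\<sigma>\<in>?P. if \<sigma> (Suc 0) \<in> B then 1 else (0::real))"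
    using assms(2) by (intro swap_sum) auto
  have "(\<Sum>\<sigma>\<in>?P. if \<sigma> s \<in> B then 1 else (0::real)) = (\<Sum>\<sigma>\<in>?P. if \<sigma> (Suc 0) \<in> B then 1 else (0::real))"
    using sw by simp
  then show ?thesis using e r by simp
qed

lemma sumX:
  assumes "B \<subseteq> {1..n}" "j \<le> n"
  shows "(\<Sum>\<sigma>\<in>{\<sigma>. \<sigma> permutes {1..n}}. real (card (\<sigma> ` {1..j} \<inter> B)))
     = real j * real (card {\<sigma>. \<sigma> permutes {1..n}}) * real (card B) / real n"
  using assms(2)
proof (induction j)
  case 0 then show ?case by simp
next
  case (Suc j)
  let ?P = "{\<sigma>. \<sigma> permutes {1..n}}"
  have jn: "j < n" using Suc(2) by simp
  have "(\<Sum>\<sigma>\<in>?P. real (card (\<sigma> ` {1..Suc j} \<inter> B)))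
      = (\<Sum>\<sigma>\<in>?P. real (card (\<sigma> ` {1..j} \<inter> B)) + (if \<sigma> (Suc j) \<in> B then 1 else 0))"
    using X_Suc[OF _ jn] by (intro sum.cong) auto
  also have "\<dots> = (\<Sum>\<sigma>\<in>?P. real (card (\<sigma> ` {1..j} \<inter> B))) + (\<Sum>\<sigma>\<in>?P. if \<sigma> (Suc j) \<in> B then 1 else 0)"
    by (rule sum.distrib)
  also have "(\<Sum>\<sigma>\<in>?P. if \<sigma> (Suc j) \<in> B then 1 else (0::real)) = real (card ?P) * real (card B) / real n"
    using sum_ind[OF assms(1), of "Suc j"] jn by (simp add: field_simps)
  finally show ?case using Suc jn by (simp add: field_simps)
qed


lemma decay:
  assumes B: "B \<subseteq> {1..n}" and r: "1 \<le> r" "r \<le> card B"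
  shows "j \<le> n \<Longrightarrow> (\<Sum>\<sigma>\<in>{\<sigma>. \<sigma> permutes {1..n}}. real r - real (min (card (\<sigma> ` {1..j} \<inter> B)) r))
     \<le> (1 - real (card B) / (real r * real n)) ^ j * (real (card {\<sigma>. \<sigma> permutes {1..n}}) * real r)"
proof (induction j)
  case 0 then show ?case by simp
next
  case (Suc j)
  let ?P = "{\<sigma>. \<sigma> permutes {1..n}}"
  let ?m = "card B"
  let ?X = "\<lambda>\<sigma>. card (\<sigma> ` {1..j} \<inter> B)"
  define q where "q = real ?m / (real r * real n)"
  define S where "S = (\<Sum>\<sigma>\<in>?P. real r - real (min (?X \<sigma>) r))"
  define h where "h = (\<lambda>Y. if card (Y \<inter> B) < r then 1 else (0::real))"
  define T where "T = (\<Sum>\<sigma>\<in>?P. h (\<sigma> ` {1..j}) * (if \<sigma> (Suc j) \<in> B then 1 else 0))"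
  have jn: "j < n" using Suc(2) by simp
  have mn: "?m \<le> n" using card_mono[OF _ B] by simp
  have rpos: "0 < real r" using r by simp
  have npos: "0 < real n" using jn by simp
  have q0: "0 \<le> q" unfolding q_def by simp
  have nr: "1 * n \<le> r * n" by (rule mult_le_mono1[OF r(1)])
  have "?m \<le> r * n" by (rule le_trans[OF mn nr[unfolded mult.left_neutral]])
  then have mrn: "real ?m \<le> real r * real n" by (metis of_nat_le_iff of_nat_mult)
  have q1: "q \<le> 1" unfolding q_def using mrn rpos npos by (simp add: pos_divide_le_eq)
  have S0: "0 \<le> S" unfolding S_def by (intro sum_nonneg) auto
  have step: "real r - real (min (card (\<sigma> ` {1..Suc j} \<inter> B)) r)
     = (real r - real (min (?X \<sigma>) r)) - h (\<sigma> ` {1..j}) * (if \<sigma> (Suc j) \<in> B then 1 else 0)"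
    if "\<sigma> \<in> ?P" for \<sigma>
    using X_Suc[of \<sigma> n j B] that jn unfolding h_def by auto
  have Sj1: "(\<Sum>\<sigma>\<in>?P. real r - real (min (card (\<sigma> ` {1..Suc j} \<inter> B)) r)) = S - T"
  proof -
    have "(\<Sum>\<sigma>\<in>?P. real r - real (min (card (\<sigma> ` {1..Suc j} \<inter> B)) r))
      = (\<Sum>\<sigma>\<in>?P. (real r - real (min (?X \<sigma>) r)) - h (\<sigma> ` {1..j}) * (if \<sigma> (Suc j) \<in> B then 1 else 0))"
      by (rule sum.cong[OF refl]) (rule step)
    also have "\<dots> = S - T" unfolding S_def T_def by (rule sum_subtractf)
    finally show ?thesis .
  qed
  have "T * real (n - j) = (\<Sum>\<sigma>\<in>?P. h (\<sigma> ` {1..j}) * real (card (\<sigma> ` {Suc j..n} \<inter> B)))"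
    unfolding T_def by (rule exch[OF jn])
  also have "\<dots> = (\<Sum>\<sigma>\<in>?P. h (\<sigma> ` {1..j}) * (real ?m - real (?X \<sigma>)))"
  proof (intro sum.cong refl)
    fix \<sigma> assume "\<sigma> \<in> ?P"
    then have "?X \<sigma> + card (\<sigma> ` {Suc j..n} \<inter> B) = ?m" using count_split[of \<sigma> n j B] jn B by simp
    then show "h (\<sigma> ` {1..j}) * real (card (\<sigma> ` {Suc j..n} \<inter> B)) = h (\<sigma> ` {1..j}) * (real ?m - real (?X \<sigma>))"
      by (metis add_diff_cancel_left' of_nat_add diff_add_cancel)
  qed
  also have "\<dots> \<ge> (\<Sum>\<sigma>\<in>?P. (real ?m / real r) * (real r - real (min (?X \<sigma>) r)))"
  proof (intro sum_mono)
    fix \<sigma> assume "\<sigma> \<in> ?P"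
    show "(real ?m / real r) * (real r - real (min (?X \<sigma>) r)) \<le> h (\<sigma> ` {1..j}) * (real ?m - real (?X \<sigma>))"
    proof (cases "?X \<sigma> < r")
      case True
      then have hh: "h (\<sigma> ` {1..j}) = 1" unfolding h_def by simp
      have "real ?m * (real r - real (?X \<sigma>)) \<le> real r * (real ?m - real (?X \<sigma>))"
      proof -
        have "real r * real (?X \<sigma>) \<le> real ?m * real (?X \<sigma>)" using r by (intro mult_right_mono) auto
        then show ?thesis by (simp add: algebra_simps)
      qed
      then show ?thesis using True hh rpos by (simp add: field_simps)
    next
      case False
      then show ?thesis unfolding h_def by simp
    qed
  qed
  finally have Tn: "(real ?m / real r) * S \<le> T * real (n - j)"
    unfolding S_def by (simp add: sum_distrib_left)
  have "q * S \<le> T"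
  proof -
    have nj: "0 < real (n - j)" "real (n - j) \<le> real n" using jn by auto
    have "q * S = (real ?m / real r) * S / real n" unfolding q_def by (simp add: field_simps)
    also have "\<dots> \<le> (real ?m / real r) * S / real (n - j)"
      using nj S0 rpos by (intro divide_left_mono) auto
    also have "\<dots> \<le> T * real (n - j) / real (n - j)" using Tn nj(1) by (intro divide_right_mono) auto
    also have "\<dots> = T" using nj(1) by simp
    finally show ?thesis .
  qed
  then have "S - T \<le> (1 - q) * S" by (simp add: algebra_simps)
  also have "\<dots> \<le> (1 - q) * ((1 - q) ^ j * (real (card ?P) * real r))"
    using Suc(1) jn q1 unfolding S_def q_def by (intro mult_left_mono) auto
  finally show ?case using Sj1 unfolding q_def by simp
qed

lemma lemmaG:
  assumes B: "B \<subseteq> {1..n}" and jn: "j \<le> n" and n: "1 \<le> n"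
  shows "(1 - 1 / exp 1) * real (card {\<sigma>. \<sigma> permutes {1..n}}) * min (real j * real (card B) / real n) (real r)
    \<le> (\<Sum>\<sigma>\<in>{\<sigma>. \<sigma> permutes {1..n}}. real (min (card (\<sigma> ` {1..j} \<inter> B)) r))"
proof -
  let ?P = "{\<sigma>. \<sigma> permutes {1..n}}"
  let ?m = "card B"
  let ?N = "real (card ?P)"
  have c: "0 \<le> 1 - 1 / exp (1::real)" "1 - 1 / exp (1::real) \<le> 1" using one_le_exp_iff[of "1::real"] by auto
  have fB: "finite B" using B finite_subset by blast
  show ?thesis
  proof (cases "r = 0")
    case True
    have "min (real j * real (card B) / real n) (real r) \<le> 0" using True by simp
    then have "(1 - 1 / exp 1) * ?N * min (real j * real (card B) / real n) (real r) \<le> 0"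
      using c by (simp add: mult_nonneg_nonpos)
    then show ?thesis by (smt (verit) of_nat_0_le_iff sum_nonneg)
  next
    case r0: False
    show ?thesis
    proof (cases "?m \<le> r")
      case True
      have "(\<Sum>\<sigma>\<in>?P. real (min (card (\<sigma> ` {1..j} \<inter> B)) r)) = (\<Sum>\<sigma>\<in>?P. real (card (\<sigma> ` {1..j} \<inter> B)))"
      proof (intro sum.cong refl)
        fix \<sigma> have "card (\<sigma> ` {1..j} \<inter> B) \<le> ?m" using fB by (intro card_mono) auto
        then show "real (min (card (\<sigma> ` {1..j} \<inter> B)) r) = real (card (\<sigma> ` {1..j} \<inter> B))" using True by simp
      qed
      also have "\<dots> = real j * ?N * real ?m / real n" using sumX[OF B jn] .
      finally have eq: "(\<Sum>\<sigma>\<in>?P. real (min (card (\<sigma> ` {1..j} \<inter> B)) r)) = ?N * (real j * real ?m / real n)" by simp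
      have "(1 - 1 / exp 1) * ?N * min (real j * real ?m / real n) (real r) \<le> 1 * ?N * (real j * real ?m / real n)"
        using c by (intro mult_mono) auto
      then show ?thesis using eq by simp
    next
      case False
      have r1: "1 \<le> r" using r0 by simp
      have d: "(\<Sum>\<sigma>\<in>?P. real r - real (min (card (\<sigma> ` {1..j} \<inter> B)) r))
        \<le> (1 - real ?m / (real r * real n)) ^ j * (?N * real r)"
        using decay[OF B r1, of j] False jn by simp
      define x where "x = real j * real ?m / (real r * real n)"
      have x0: "0 \<le> x" unfolding x_def by simp
      have q1: "0 \<le> 1 - real ?m / (real r * real n)"
      proof -
        have mn: "?m \<le> n" using card_mono[OF _ B] by simp
        have nr: "1 * n \<le> r * n" by (rule mult_le_mono1[OF r1])
        have "?m \<le> r * n" by (rule le_trans[OF mn nr[unfolded mult.left_neutral]])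
        then have "real ?m \<le> real r * real n" by (metis of_nat_le_iff of_nat_mult)
        then show ?thesis using r1 n by (simp add: pos_divide_le_eq)
      qed
      have ex: "1 - real ?m / (real r * real n) \<le> exp (- (real ?m / (real r * real n)))"
        using exp_ge_add_one_self[of "- (real ?m / (real r * real n))"] by simp
      have "(1 - real ?m / (real r * real n)) ^ j \<le> exp (- (real ?m / (real r * real n))) ^ j"
        using q1 ex by (intro power_mono) auto
      also have "\<dots> = exp (- x)" unfolding x_def using exp_of_nat_mult[of j "- (real ?m / (real r * real n))"]
        by (simp add: field_simps)
      finally have pe: "(1 - real ?m / (real r * real n)) ^ j \<le> exp (- x)" .
      have "(\<Sum>\<sigma>\<in>?P. real r - real (min (card (\<sigma> ` {1..j} \<inter> B)) r))
         = ?N * real r - (\<Sum>\<sigma>\<in>?P. real (min (card (\<sigma> ` {1..j} \<inter> B)) r))"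
        by (simp add: sum_subtractf)
      then have lb: "?N * real r * (1 - exp (- x)) \<le> (\<Sum>\<sigma>\<in>?P. real (min (card (\<sigma> ` {1..j} \<inter> B)) r))"
        using d pe mult_left_mono[OF pe, of "?N * real r"] by (simp add: algebra_simps)
      have rp: "0 < real r" using r1 by simp
      have mr: "min a (real r) = real r * min (a / real r) 1" for a
      proof (cases "a \<le> real r")
        case True then have "a / real r \<le> 1" using rp by (simp add: pos_divide_le_eq)
        then show ?thesis using True rp by (simp add: min_def)
      next
        case False then have "\<not> a / real r \<le> 1" using rp by (simp add: pos_divide_le_eq)
        then show ?thesis using False rp by (simp add: min_def)
      qed
      have xr: "x = (real j * real ?m / real n) / real r" unfolding x_def by (simp add: field_simps)
      have "min (real j * real ?m / real n) (real r) = real r * min x 1"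
        unfolding xr by (rule mr)
      then have "(1 - 1 / exp 1) * ?N * min (real j * real ?m / real n) (real r)
          = ?N * real r * ((1 - 1 / exp 1) * min x 1)" by simp
      also have "\<dots> \<le> ?N * real r * (1 - exp (- x))"
        using exp_bound[OF x0] by (intro mult_left_mono) auto
      finally show ?thesis using lb by linarith
    qed
  qed
qed

lemma mat_fin: "matroid E I \<Longrightarrow> finite E" unfolding matroid_def by blast
lemma mat_sub: "matroid E I \<Longrightarrow> X \<in> I \<Longrightarrow> X \<subseteq> E" unfolding matroid_def by blast
lemma mat_down: "matroid E I \<Longrightarrow> X \<in> I \<Longrightarrow> Y \<subseteq> X \<Longrightarrow> Y \<in> I" unfolding matroid_def by blast
lemma mat_empty: "matroid E I \<Longrightarrow> {} \<in> I" unfolding matroid_def by blast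
lemma mat_aug: "matroid E I \<Longrightarrow> X \<in> I \<Longrightarrow> Y \<in> I \<Longrightarrow> card X < card Y \<Longrightarrow> \<exists>x\<in>Y - X. insert x X \<in> I"
  unfolding matroid_def by blast
lemma indep_fin: "matroid E I \<Longrightarrow> X \<in> I \<Longrightarrow> finite X"
  using mat_fin mat_sub finite_subset by metis

lemma rk_fin:
  assumes "matroid E I"
  shows "finite {card Y | Y. Y \<subseteq> X \<and> Y \<in> I}"
proof -
  have "{card Y | Y. Y \<subseteq> X \<and> Y \<in> I} \<subseteq> card ` Pow E"
    using mat_sub[OF assms] by auto
  moreover have "finite E" using mat_fin[OF assms] .
  ultimately show ?thesis using finite_subset by blast
qed

lemma rk_ge:
  assumes "matroid E I" "Y \<subseteq> X" "Y \<in> I"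
  shows "card Y \<le> rk I X"
  unfolding rk_def using rk_fin[OF assms(1), of X] assms(2,3) by (intro Max_ge) auto

lemma rk_obtain:
  assumes "matroid E I"
  obtains Y where "Y \<subseteq> X" "Y \<in> I" "card Y = rk I X"
proof -
  have ne: "{card Y | Y. Y \<subseteq> X \<and> Y \<in> I} \<noteq> {}"
    using mat_empty[OF assms] by auto
  have "rk I X \<in> {card Y | Y. Y \<subseteq> X \<and> Y \<in> I}"
    unfolding rk_def using Max_in[OF rk_fin[OF assms] ne] .
  then show ?thesis using that by auto
qed

lemma rk_mono:
  assumes "matroid E I" "X \<subseteq> Y"
  shows "rk I X \<le> rk I Y"
proof -
  obtain Z where "Z \<subseteq> X" "Z \<in> I" "card Z = rk I X" using rk_obtain[OF assms(1)] by blast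
  then show ?thesis using rk_ge[OF assms(1), of Z Y] assms(2) by auto
qed

lemma rk_empty:
  assumes "matroid E I"
  shows "rk I {} = 0"
proof -
  obtain Z where "Z \<subseteq> {}" "Z \<in> I" "card Z = rk I {}" using rk_obtain[OF assms(1)] by blast
  then show ?thesis by auto
qed

lemma extend:
  assumes m: "matroid E I"
  shows "J \<in> I \<Longrightarrow> J \<subseteq> X \<Longrightarrow> \<exists>K. J \<subseteq> K \<and> K \<subseteq> X \<and> K \<in> I \<and> card K = rk I X"
proof (induction "rk I X - card J" arbitrary: J rule: less_induct)
  case less
  have le: "card J \<le> rk I X" using rk_ge[OF m less(3) less(2)] .
  show ?case
  proof (cases "card J = rk I X")
    case True then show ?thesis using less by blast
  next
    case False
    obtain M where M: "M \<subseteq> X" "M \<in> I" "card M = rk I X" using rk_obtain[OF m] by blast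
    have "card J < card M" using False le M by auto
    then obtain x where x: "x \<in> M - J" "insert x J \<in> I"
      using mat_aug[OF m less(2) M(2)] by blast
    have fJ: "finite J" using indep_fin[OF m less(2)] .
    have c: "card (insert x J) = card J + 1" using x fJ by auto
    have sx: "insert x J \<subseteq> X" using x M less(3) by auto
    have lt: "rk I X - card (insert x J) < rk I X - card J" using c False le by simp
    obtain K where "insert x J \<subseteq> K \<and> K \<subseteq> X \<and> K \<in> I \<and> card K = rk I X"
      using less(1)[OF lt x(2) sx] by blast
    then show ?thesis by blast
  qed
qed

lemma submod:
  assumes m: "matroid E I"
  shows "rk I (X \<union> Y) + rk I (X \<inter> Y) \<le> rk I X + rk I Y"
proof -
  obtain J where J: "J \<subseteq> X \<inter> Y" "J \<in> I" "card J = rk I (X \<inter> Y)" using rk_obtain[OF m] by blast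
  obtain K where K: "J \<subseteq> K" "K \<subseteq> X \<union> Y" "K \<in> I" "card K = rk I (X \<union> Y)"
    using extend[OF m J(2), of "X \<union> Y"] J(1) by blast
  have fK: "finite K" using indep_fin[OF m K(3)] .
  have indX: "K \<inter> X \<in> I" by (rule mat_down[OF m K(3)]) blast
  have indY: "K \<inter> Y \<in> I" by (rule mat_down[OF m K(3)]) blast
  have indXY: "K \<inter> X \<inter> Y \<in> I" by (rule mat_down[OF m K(3)]) blast
  have cX: "card (K \<inter> X) \<le> rk I X" using rk_ge[OF m _ indX] by auto
  have cY: "card (K \<inter> Y) \<le> rk I Y" using rk_ge[OF m _ indY] by auto
  have cXY: "card (K \<inter> X \<inter> Y) \<le> card J" using rk_ge[OF m _ indXY, of "X \<inter> Y"] J(3) by auto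
  have cXY2: "card J \<le> card (K \<inter> X \<inter> Y)" using J(1) K(1) fK by (intro card_mono) auto
  have KU: "(K \<inter> X) \<union> (K \<inter> Y) = K" using K(2) by auto
  have "card ((K \<inter> X) \<union> (K \<inter> Y)) + card ((K \<inter> X) \<inter> (K \<inter> Y)) = card (K \<inter> X) + card (K \<inter> Y)"
    by (rule card_Un_Int[symmetric]) (simp_all add: fK)
  moreover have eqI: "(K \<inter> X) \<inter> (K \<inter> Y) = K \<inter> X \<inter> Y" by auto
  ultimately have "card K + card (K \<inter> X \<inter> Y) = card (K \<inter> X) + card (K \<inter> Y)"
    unfolding KU by simp
  then show ?thesis using cX cY cXY cXY2 J(3) K(4) by linarith
qed

lemma subadd:
  assumes m: "matroid E I" and fX: "finite X"
  shows "rk I (X \<union> Y) \<le> card X + rk I Y"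
proof -
  obtain Z where Z: "Z \<subseteq> X \<union> Y" "Z \<in> I" "card Z = rk I (X \<union> Y)" using rk_obtain[OF m] by blast
  have fZ: "finite Z" using indep_fin[OF m Z(2)] .
  have indY: "Z \<inter> Y \<in> I" by (rule mat_down[OF m Z(2)]) blast
  have "card (Z \<inter> Y) \<le> rk I Y" using rk_ge[OF m _ indY] by auto
  moreover have "card (Z \<inter> X) \<le> card X" using fX by (intro card_mono) auto
  moreover have ZU: "(Z \<inter> X) \<union> (Z \<inter> Y) = Z" using Z(1) by auto
  have "card ((Z \<inter> X) \<union> (Z \<inter> Y)) \<le> card (Z \<inter> X) + card (Z \<inter> Y)" by (rule card_Un_le)
  then have "card Z \<le> card (Z \<inter> X) + card (Z \<inter> Y)" unfolding ZU .
  ultimately show ?thesis using Z(3) by linarith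
qed

lemma indep_noloops:
  assumes m: "matroid E I" and "Y \<in> I"
  shows "Y \<subseteq> E - loops E I"
proof
  fix x assume x: "x \<in> Y"
  have "{x} \<in> I" using mat_down[OF m assms(2)] x by blast
  moreover have "x \<in> E" using mat_sub[OF m assms(2)] x by blast
  ultimately show "x \<in> E - loops E I" unfolding loops_def by auto
qed

lemma restrict_eq:
  assumes m: "matroid E I"
  shows "restrict_matroid I (E - loops E I) = I"
  using indep_noloops[OF m] unfolding restrict_matroid_def by auto

lemma rk_loops:
  assumes m: "matroid E I"
  shows "rk I A = rk I (A \<inter> (E - loops E I))"
proof -
  have "{card Y | Y. Y \<subseteq> A \<and> Y \<in> I} = {card Y | Y. Y \<subseteq> A \<inter> (E - loops E I) \<and> Y \<in> I}"
    using indep_noloops[OF m] by blast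
  then show ?thesis unfolding rk_def by simp
qed

lemma chain_mono:
  assumes "\<forall>i<k. F i \<subset> F (Suc i)" "i \<le> j" "j \<le> k"
  shows "F i \<subseteq> F j"
  using assms(2,3)
proof (induction j rule: dec_induct)
  case base then show ?case by simp
next
  case (step n)
  then have "n < k" by simp
  then have "F n \<subseteq> F (Suc n)" using assms(1) by auto
  then show ?case using step by auto
qed

lemma rk_F_sum:
  assumes m: "matroid E I" and ch: "\<forall>i<k. F i \<subset> F (Suc i)" and F0: "F 0 = {}"
  shows "t \<le> k \<Longrightarrow> real (rk I (F t)) = (\<Sum>i=1..t. real (rk I (F i) - rk I (F (i - 1))))"
proof (induction t)
  case 0 then show ?case using F0 rk_empty[OF m] by simp
next
  case (Suc t)
  have "t < k" using Suc(2) by simp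
  then have "F t \<subseteq> F (Suc t)" using ch by blast
  then have le: "rk I (F t) \<le> rk I (F (Suc t))" by (rule rk_mono[OF m])
  have e1: "real (rk I (F (Suc t))) = real (rk I (F t)) + real (rk I (F (Suc t)) - rk I (F t))"
    using le by (simp add: of_nat_diff)
  have e2: "(\<Sum>i=1..Suc t. real (rk I (F i) - rk I (F (i - 1))))
     = (\<Sum>i=1..t. real (rk I (F i) - rk I (F (i - 1)))) + real (rk I (F (Suc t)) - rk I (F t))"
    by simp
  have e3: "real (rk I (F t)) = (\<Sum>i=1..t. real (rk I (F i) - rk I (F (i - 1))))"
    using Suc.IH Suc.prems by simp
  show ?case using e1 e2 e3 by linarith
qed

lemma card_F_sum:
  assumes ch: "\<forall>i<k. F i \<subset> F (Suc i)" and fA: "finite A"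
  shows "t \<le> u \<Longrightarrow> u \<le> k \<Longrightarrow> card (A \<inter> (F u - F t)) = (\<Sum>i\<in>{Suc t..u}. card (A \<inter> minor_ground F i))"
proof (induction u rule: dec_induct)
  case base then show ?case by simp
next
  case (step n)
  have nk: "n < k" using step by simp
  have s1: "F t \<subseteq> F n" using chain_mono[OF ch step(1)] nk by simp
  have s2: "F n \<subseteq> F (Suc n)" using ch nk by blast
  have mg: "minor_ground F (Suc n) = F (Suc n) - F n" unfolding minor_ground_def by simp
  have u: "A \<inter> (F (Suc n) - F t) = (A \<inter> (F n - F t)) \<union> (A \<inter> minor_ground F (Suc n))"
    unfolding mg using s1 s2 by auto
  have d: "(A \<inter> (F n - F t)) \<inter> (A \<inter> minor_ground F (Suc n)) = {}" unfolding mg by auto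
  have "card (A \<inter> (F (Suc n) - F t)) = card (A \<inter> (F n - F t)) + card (A \<inter> minor_ground F (Suc n))"
    unfolding u by (rule card_Un_disjoint[OF _ _ d]) (simp_all add: fA)
  moreover have "(\<Sum>i\<in>{Suc t..Suc n}. card (A \<inter> minor_ground F i))
      = (\<Sum>i\<in>{Suc t..n}. card (A \<inter> minor_ground F i)) + card (A \<inter> minor_ground F (Suc n))"
  proof -
    have ins: "{Suc t..Suc n} = insert (Suc n) {Suc t..n}" using step(1) by auto
    show ?thesis unfolding ins by (subst sum.insert) auto
  qed
  moreover have "card (A \<inter> (F n - F t)) = (\<Sum>i\<in>{Suc t..n}. card (A \<inter> minor_ground F i))"
    using step.IH nk by simp
  ultimately show ?case by linarith
qed

lemma rkM_bound:
  assumes m: "matroid E I" and F0: "F 0 = {}" and Fk: "F k = E - loops E I"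
    and ch: "\<forall>i<k. F i \<subset> F (Suc i)" and A: "A \<subseteq> E" and t: "t \<le> k"
  shows "real (rk I A) \<le> (\<Sum>i=1..t. real (rk I (F i) - rk I (F (i - 1))))
           + (\<Sum>i\<in>{Suc t..k}. real (card (A \<inter> minor_ground F i)))"
proof -
  have fA: "finite A" using A mat_fin[OF m] finite_subset by blast
  have "rk I A = rk I (A \<inter> (E - loops E I))" by (rule rk_loops[OF m])
  also have "\<dots> \<le> rk I ((A \<inter> (F k - F t)) \<union> F t)" using Fk by (intro rk_mono[OF m]) auto
  also have "\<dots> \<le> card (A \<inter> (F k - F t)) + rk I (F t)" by (rule subadd[OF m]) (simp add: fA)
  finally have a: "real (rk I A) \<le> real (card (A \<inter> (F k - F t))) + real (rk I (F t))" by linarith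
  have b: "card (A \<inter> (F k - F t)) = (\<Sum>i\<in>{Suc t..k}. card (A \<inter> minor_ground F i))"
    using card_F_sum[OF ch fA t order_refl] .
  have c: "real (rk I (F t)) = (\<Sum>i=1..t. real (rk I (F i) - rk I (F (i - 1))))"
    using rk_F_sum[OF m ch F0 t] .
  show ?thesis using a unfolding b c by (simp add: of_nat_sum)
qed

lemma rkP_bound:
  assumes ch: "\<forall>i<k. F i \<subset> F (Suc i)" and fA: "finite A"
  shows "(\<Sum>i=1..k. min (card (A \<inter> minor_ground F i)) (rs i)) \<le> rk (partition_indep k (minor_ground F) rs) A"
proof -
  define mn where "mn i = min (card (A \<inter> minor_ground F i)) (rs i)" for i
  have "\<forall>i. \<exists>T. T \<subseteq> A \<inter> minor_ground F i \<and> card T = mn i \<and> finite T"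
  proof
    fix i
    have "mn i \<le> card (A \<inter> minor_ground F i)" unfolding mn_def by simp
    then obtain T where "T \<subseteq> A \<inter> minor_ground F i" "card T = mn i" "finite T"
      by (rule obtain_subset_with_card_n)
    then show "\<exists>T. T \<subseteq> A \<inter> minor_ground F i \<and> card T = mn i \<and> finite T" by blast
  qed
  then obtain Is where Is: "\<And>i. Is i \<subseteq> A \<inter> minor_ground F i" "\<And>i. card (Is i) = mn i" "\<And>i. finite (Is i)"
    by metis
  define U where "U = (\<Union>i\<in>{1..k}. Is i)"
  have IP: "\<forall>i\<in>{1..k}. Is i \<subseteq> minor_ground F i \<and> card (Is i) \<le> rs i"
    using Is unfolding mn_def by auto
  have UP: "U \<in> partition_indep k (minor_ground F) rs"
    unfolding partition_indep_def U_def
    by (rule CollectI, rule exI[of _ Is], rule conjI[OF IP refl])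
  have UA: "U \<subseteq> A" unfolding U_def using Is by auto
  have key: "minor_ground F a \<inter> minor_ground F b = {}" if "a < b" "a \<in> {1..k}" "b \<in> {1..k}" for a b
  proof -
    have "F a \<subseteq> F (b - 1)" using chain_mono[OF ch, of a "b - 1"] that by auto
    then show ?thesis unfolding minor_ground_def by auto
  qed
  have disj: "\<forall>i\<in>{1..k}. \<forall>j\<in>{1..k}. i \<noteq> j \<longrightarrow> Is i \<inter> Is j = {}"
  proof (intro ballI impI)
    fix i j assume ij: "i \<in> {1..k}" "j \<in> {1..k}" "i \<noteq> j"
    show "Is i \<inter> Is j = {}"
    proof (cases "i < j")
      case True then show ?thesis using key[of i j] ij Is(1)[of i] Is(1)[of j] by blast
    next
      case False then have "j < i" using ij by auto
      then show ?thesis using key[of j i] ij Is(1)[of i] Is(1)[of j] by blast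
    qed
  qed
  have cU: "card U = (\<Sum>i=1..k. mn i)"
    unfolding U_def using card_UN_disjoint[of "{1..k}" Is] disj Is by simp
  have fin: "finite {card Y | Y. Y \<subseteq> A \<and> Y \<in> partition_indep k (minor_ground F) rs}"
  proof (rule finite_subset[of _ "{..card A}"])
    show "{card Y | Y. Y \<subseteq> A \<and> Y \<in> partition_indep k (minor_ground F) rs} \<subseteq> {..card A}"
      by (auto intro: card_mono[OF fA])
  qed simp
  have "card U \<le> rk (partition_indep k (minor_ground F) rs) A"
    unfolding rk_def using UP UA by (intro Max_ge[OF fin]) auto
  then show ?thesis using cU unfolding mn_def by simp
qed

lemma minor_rank_eq:
  assumes "F (i - 1) \<subseteq> F i"
  shows "minor_rank I F i = rk I (F i) - rk I (F (i - 1))"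
proof -
  have eq: "(F i - F (i - 1)) \<union> F (i - 1) = F i" using assms by auto
  show ?thesis unfolding minor_rank_def contract_rk_def minor_ground_def eq ..
qed

lemma lam_anti:
  assumes d: "\<forall>i. 1 \<le> i \<and> i < k \<longrightarrow> lam (Suc i) < lam i" and "1 \<le> i" "i \<le> i'" "i' \<le> k"
  shows "lam i' \<le> (lam i :: real)"
  using assms(3,4)
proof (induction i' rule: dec_induct)
  case base then show ?case by simp
next
  case (step n)
  have "lam (Suc n) < lam n" using d step assms(2) by simp
  then show ?case using step by simp
qed

lemma lam_rel:
  assumes m: "matroid E I" and ps: "principal_sequence I (E - loops E I) k F lam" and i: "i \<in> {1..k}"
  shows "lam i * real (rk I (F i) - rk I (F (i - 1))) = real (card (minor_ground F i))"
proof -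
  let ?S = "E - loops E I"
  have mi: "F (i - 1) \<in> minimizers I ?S (lam i)" "F i \<in> minimizers I ?S (lam i)"
    using ps i unfolding principal_sequence_def by auto
  have ch: "\<forall>i<k. F i \<subset> F (Suc i)" using ps unfolding principal_sequence_def by auto
  have sub: "F (i - 1) \<subseteq> F i" using chain_mono[OF ch, of "i - 1" i] i by auto
  have FiS: "F i \<subseteq> ?S" using mi unfolding minimizers_def by auto
  have fin: "finite (F i)" using FiS mat_fin[OF m] finite_subset by blast
  have fin2: "finite (F (i - 1))" using fin sub finite_subset by blast
  have "flam I (lam i) (F i) \<le> flam I (lam i) (F (i - 1))"
    using mi unfolding minimizers_def by auto
  moreover have "flam I (lam i) (F (i - 1)) \<le> flam I (lam i) (F i)"
    using mi unfolding minimizers_def by auto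
  ultimately have eq: "lam i * real (rk I (F i)) - real (card (F i)) = lam i * real (rk I (F (i - 1))) - real (card (F (i - 1)))"
    unfolding flam_def by linarith
  have rle: "rk I (F (i - 1)) \<le> rk I (F i)" by (rule rk_mono[OF m sub])
  have cle: "card (F (i - 1)) \<le> card (F i)" by (rule card_mono[OF fin sub])
  have cm: "card (minor_ground F i) = card (F i) - card (F (i - 1))"
    unfolding minor_ground_def using card_Diff_subset[OF fin2 sub] .
  show ?thesis using eq rle cle unfolding cm by (simp add: of_nat_diff algebra_simps)
qed

lemma card_trans:
  assumes e: "bij_betw e {1..n} E" and T: "T \<subseteq> {1..n}"
  shows "card (e ` T \<inter> G) = card (T \<inter> {x\<in>{1..n}. e x \<in> G})"
proof -
  have inj: "inj_on e {1..n}" using e unfolding bij_betw_def by blast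
  have eq: "e ` T \<inter> G = e ` (T \<inter> {x\<in>{1..n}. e x \<in> G})" using T by auto
  have "inj_on e (T \<inter> {x\<in>{1..n}. e x \<in> G})" using inj by (rule inj_on_subset) auto
  then show ?thesis unfolding eq by (rule card_image)
qed

lemma card_B:
  assumes e: "bij_betw e {1..n} E" and G: "G \<subseteq> E"
  shows "card {x\<in>{1..n}. e x \<in> G} = card G"
proof -
  have inj: "inj_on e {1..n}" using e unfolding bij_betw_def by blast
  have im: "e ` {1..n} = E" using e unfolding bij_betw_def by blast
  have img: "e ` {x\<in>{1..n}. e x \<in> G} = G" using im G by auto
  have "inj_on e {x\<in>{1..n}. e x \<in> G}" using inj by (rule inj_on_subset) auto
  then have "card (e ` {x\<in>{1..n}. e x \<in> G}) = card {x\<in>{1..n}. e x \<in> G}" by (rule card_image)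
  then show ?thesis unfolding img by simp
qed

theorem lemma7:
  fixes E :: "'a set" and I :: "'a set set" and e :: "nat \<Rightarrow> 'a" and n k j :: nat
    and F :: "nat \<Rightarrow> 'a set" and lam :: "nat \<Rightarrow> real"
  assumes "matroid E I"
    and "bij_betw e {1..n} E"
    and "principal_sequence (restrict_matroid I (E - loops E I)) (E - loops E I) k F lam"
    and "1 \<le> j" and "j \<le> n"
  shows "measure_pmf.expectation (pmf_of_set {\<sigma>. \<sigma> permutes {1..n}})
           (\<lambda>\<sigma>. real (rk (partition_indep k (minor_ground F)
                        (minor_rank (restrict_matroid I (E - loops E I)) F)) (e ` \<sigma> ` {1..j})))
         \<ge> (1 - 1 / exp 1) * measure_pmf.expectation (pmf_of_set {\<sigma>. \<sigma> permutes {1..n}})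
           (\<lambda>\<sigma>. real (rk I (e ` \<sigma> ` {1..j})))"
proof -
  note m = assms(1)
  let ?S = "E - loops E I"
  let ?PM = "partition_indep k (minor_ground F) (minor_rank I F)"
  have RI: "restrict_matroid I ?S = I" by (rule restrict_eq[OF m])
  have ps: "principal_sequence I ?S k F lam" using assms(3) unfolding RI .
  have F0: "F 0 = {}" and Fk: "F k = ?S" and ch: "\<forall>i<k. F i \<subset> F (Suc i)"
     and dec: "\<forall>i. 1 \<le> i \<and> i < k \<longrightarrow> lam (Suc i) < lam i"
    using ps unfolding principal_sequence_def by auto
  define P where "P = {\<sigma>. \<sigma> permutes {1..n}}"
  define N where "N = real (card P)"
  define r where "r i = rk I (F i) - rk I (F (i - 1))" for i
  define B where "B i = {x\<in>{1..n}. e x \<in> minor_ground F i}" for i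
  define c where "c = 1 - 1 / exp (1::real)"
  define p where "p = real j / real n"
  define TS where "TS = {i. i \<le> k \<and> (i = 0 \<or> 1 \<le> p * lam i)}"
  define t where "t = Max TS"
  have n1: "1 \<le> n" using assms(4,5) by simp
  have fP: "finite P" unfolding P_def by (rule finite_permutations) simp
  have neP: "P \<noteq> {}" unfolding P_def using permutes_id by blast
  have Npos: "0 < N" unfolding N_def using fP neP by (simp add: card_gt_0_iff)
  have c0: "0 \<le> c" unfolding c_def using one_le_exp_iff[of "1::real"] by auto
  have p0: "0 \<le> p" unfolding p_def by simp
  have mgE: "minor_ground F i \<subseteq> E" if "i \<in> {1..k}" for i
  proof -
    have "F i \<subseteq> F k" using chain_mono[OF ch, of i k] that by auto
    then show ?thesis unfolding minor_ground_def using Fk by auto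
  qed
  have mr: "minor_rank I F i = r i" if "i \<in> {1..k}" for i
  proof -
    have "F (i - 1) \<subseteq> F i" using chain_mono[OF ch, of "i - 1" i] that by auto
    then show ?thesis unfolding r_def by (rule minor_rank_eq)
  qed
  have cardB: "card (B i) = card (minor_ground F i)" if "i \<in> {1..k}" for i
    unfolding B_def using card_B[OF assms(2) mgE[OF that]] .
  have Bsub: "B i \<subseteq> {1..n}" for i unfolding B_def by auto
  have sig: "\<sigma> ` {1..j} \<subseteq> {1..n}" if "\<sigma> \<in> P" for \<sigma>
  proof -
    have "\<sigma> ` {1..j} \<subseteq> \<sigma> ` {1..n}" using assms(5) by auto
    then show ?thesis using permutes_image[of \<sigma> "{1..n}"] that unfolding P_def by auto
  qed
  have AE: "e ` \<sigma> ` {1..j} \<subseteq> E" if "\<sigma> \<in> P" for \<sigma>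
    using sig[OF that] assms(2) unfolding bij_betw_def by auto
  have Xeq: "card (e ` \<sigma> ` {1..j} \<inter> minor_ground F i) = card (\<sigma> ` {1..j} \<inter> B i)" if "\<sigma> \<in> P" for \<sigma> i
    unfolding B_def by (rule card_trans[OF assms(2) sig[OF that]])
  have lamr: "lam i * real (r i) = real (card (minor_ground F i))" if "i \<in> {1..k}" for i
    unfolding r_def using lam_rel[OF m ps that] .
  have finTS: "finite TS" unfolding TS_def by auto
  have TS0: "0 \<in> TS" unfolding TS_def by simp
  have tTS: "t \<in> TS" unfolding t_def using Max_in[OF finTS] TS0 by blast
  have tk: "t \<le> k" using tTS unfolding TS_def by simp
  have ht1: "1 \<le> p * lam i" if "i \<in> {1..t}" for i
  proof -
    have "t \<noteq> 0" using that by simp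
    then have a: "1 \<le> p * lam t" using tTS unfolding TS_def by simp
    have "lam t \<le> lam i" using lam_anti[OF dec, of i t] that tk by simp
    then have "p * lam t \<le> p * lam i" using p0 by (rule mult_left_mono)
    then show ?thesis using a by linarith
  qed
  have ht2: "\<not> 1 \<le> p * lam i" if "i \<in> {Suc t..k}" for i
  proof
    assume "1 \<le> p * lam i"
    then have "i \<in> TS" using that unfolding TS_def by simp
    then have "i \<le> t" unfolding t_def using Max_ge[OF finTS] by blast
    then show False using that by simp
  qed
  have meq: "real j * real (card (B i)) / real n = p * lam i * real (r i)" if "i \<in> {1..k}" for i
    unfolding p_def cardB[OF that] lamr[OF that, symmetric] by (simp add: field_simps)
  have min1: "min (real j * real (card (B i)) / real n) (real (r i)) = real (r i)" if "i \<in> {1..t}" for i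
  proof -
    have ik: "i \<in> {1..k}" using that tk by simp
    have "1 * real (r i) \<le> p * lam i * real (r i)" using ht1[OF that] by (intro mult_right_mono) auto
    then show ?thesis unfolding meq[OF ik] by simp
  qed
  have min2: "min (real j * real (card (B i)) / real n) (real (r i)) = real j * real (card (B i)) / real n"
    if "i \<in> {Suc t..k}" for i
  proof -
    have ik: "i \<in> {1..k}" using that by simp
    have "p * lam i \<le> 1" using ht2[OF that] by simp
    then have "p * lam i * real (r i) \<le> 1 * real (r i)" by (intro mult_right_mono) auto
    then show ?thesis unfolding meq[OF ik] by simp
  qed
  have UM: "(\<Sum>\<sigma>\<in>P. real (rk I (e ` \<sigma> ` {1..j})))
      \<le> N * (\<Sum>i=1..t. real (r i)) + (\<Sum>i\<in>{Suc t..k}. real j * N * real (card (B i)) / real n)"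
  proof -
    have "(\<Sum>\<sigma>\<in>P. real (rk I (e ` \<sigma> ` {1..j})))
       \<le> (\<Sum>\<sigma>\<in>P. (\<Sum>i=1..t. real (r i)) + (\<Sum>i\<in>{Suc t..k}. real (card (\<sigma> ` {1..j} \<inter> B i))))"
    proof (rule sum_mono)
      fix \<sigma> assume s: "\<sigma> \<in> P"
      have "real (rk I (e ` \<sigma> ` {1..j})) \<le> (\<Sum>i=1..t. real (r i))
          + (\<Sum>i\<in>{Suc t..k}. real (card (e ` \<sigma> ` {1..j} \<inter> minor_ground F i)))"
        unfolding r_def by (rule rkM_bound[OF m F0 Fk ch AE[OF s] tk])
      then show "real (rk I (e ` \<sigma> ` {1..j})) \<le> (\<Sum>i=1..t. real (r i))
          + (\<Sum>i\<in>{Suc t..k}. real (card (\<sigma> ` {1..j} \<inter> B i)))"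
        using Xeq[OF s] by simp
    qed
    also have "\<dots> = (\<Sum>\<sigma>\<in>P. (\<Sum>i=1..t. real (r i))) + (\<Sum>\<sigma>\<in>P. \<Sum>i\<in>{Suc t..k}. real (card (\<sigma> ` {1..j} \<inter> B i)))"
      by (rule sum.distrib)
    also have "(\<Sum>\<sigma>\<in>P. (\<Sum>i=1..t. real (r i))) = N * (\<Sum>i=1..t. real (r i))"
      unfolding N_def by simp
    also have "(\<Sum>\<sigma>\<in>P. \<Sum>i\<in>{Suc t..k}. real (card (\<sigma> ` {1..j} \<inter> B i)))
        = (\<Sum>i\<in>{Suc t..k}. \<Sum>\<sigma>\<in>P. real (card (\<sigma> ` {1..j} \<inter> B i)))"
      by (rule sum.swap)
    also have "\<dots> = (\<Sum>i\<in>{Suc t..k}. real j * N * real (card (B i)) / real n)"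
      unfolding N_def P_def using sumX[OF Bsub assms(5)] by simp
    finally show ?thesis .
  qed
  have LP: "(\<Sum>i=1..k. c * N * min (real j * real (card (B i)) / real n) (real (r i)))
      \<le> (\<Sum>\<sigma>\<in>P. real (rk ?PM (e ` \<sigma> ` {1..j})))"
  proof -
    have "(\<Sum>i=1..k. c * N * min (real j * real (card (B i)) / real n) (real (r i)))
        \<le> (\<Sum>i=1..k. \<Sum>\<sigma>\<in>P. real (min (card (\<sigma> ` {1..j} \<inter> B i)) (r i)))"
      by (rule sum_mono) (unfold c_def N_def P_def, rule lemmaG[OF Bsub assms(5) n1])
    also have "\<dots> = (\<Sum>\<sigma>\<in>P. \<Sum>i=1..k. real (min (card (\<sigma> ` {1..j} \<inter> B i)) (r i)))"
      by (rule sum.swap)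
    also have "\<dots> \<le> (\<Sum>\<sigma>\<in>P. real (rk ?PM (e ` \<sigma> ` {1..j})))"
    proof (rule sum_mono)
      fix \<sigma> assume s: "\<sigma> \<in> P"
      have fA: "finite (e ` \<sigma> ` {1..j})" by simp
      have a: "(\<Sum>i=1..k. min (card (e ` \<sigma> ` {1..j} \<inter> minor_ground F i)) (minor_rank I F i)) \<le> rk ?PM (e ` \<sigma> ` {1..j})"
        by (rule rkP_bound[OF ch fA])
      have b: "(\<Sum>i=1..k. min (card (e ` \<sigma> ` {1..j} \<inter> minor_ground F i)) (minor_rank I F i))
          = (\<Sum>i=1..k. min (card (\<sigma> ` {1..j} \<inter> B i)) (r i))"
        using Xeq[OF s] mr by (intro sum.cong) auto
      show "(\<Sum>i=1..k. real (min (card (\<sigma> ` {1..j} \<inter> B i)) (r i))) \<le> real (rk ?PM (e ` \<sigma> ` {1..j}))"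
        using a unfolding b by (metis of_nat_le_iff of_nat_sum)
    qed
    finally show ?thesis .
  qed
  have split: "{1..k} = {1..t} \<union> {Suc t..k}" using tk by auto
  have "(\<Sum>i=1..k. c * N * min (real j * real (card (B i)) / real n) (real (r i)))
     = (\<Sum>i=1..t. c * N * min (real j * real (card (B i)) / real n) (real (r i)))
       + (\<Sum>i\<in>{Suc t..k}. c * N * min (real j * real (card (B i)) / real n) (real (r i)))"
    unfolding split by (rule sum.union_disjoint) auto
  also have "(\<Sum>i=1..t. c * N * min (real j * real (card (B i)) / real n) (real (r i)))
      = c * (N * (\<Sum>i=1..t. real (r i)))"
    unfolding sum_distrib_left by (rule sum.cong[OF refl]) (simp add: min1)
  also have "(\<Sum>i\<in>{Suc t..k}. c * N * min (real j * real (card (B i)) / real n) (real (r i)))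
      = c * (\<Sum>i\<in>{Suc t..k}. real j * N * real (card (B i)) / real n)"
    unfolding sum_distrib_left by (rule sum.cong[OF refl]) (simp add: min2)
  finally have eqs: "(\<Sum>i=1..k. c * N * min (real j * real (card (B i)) / real n) (real (r i)))
     = c * (N * (\<Sum>i=1..t. real (r i)) + (\<Sum>i\<in>{Suc t..k}. real j * N * real (card (B i)) / real n))"
    by (simp add: algebra_simps)
  have main: "c * (\<Sum>\<sigma>\<in>P. real (rk I (e ` \<sigma> ` {1..j}))) \<le> (\<Sum>\<sigma>\<in>P. real (rk ?PM (e ` \<sigma> ` {1..j})))"
    using mult_left_mono[OF UM c0] LP unfolding eqs by linarith
  have EM: "measure_pmf.expectation (pmf_of_set P) (\<lambda>\<sigma>. real (rk I (e ` \<sigma> ` {1..j})))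
      = (\<Sum>\<sigma>\<in>P. real (rk I (e ` \<sigma> ` {1..j}))) / N"
    unfolding N_def by (rule integral_pmf_of_set[OF neP fP])
  have EP: "measure_pmf.expectation (pmf_of_set P) (\<lambda>\<sigma>. real (rk ?PM (e ` \<sigma> ` {1..j})))
      = (\<Sum>\<sigma>\<in>P. real (rk ?PM (e ` \<sigma> ` {1..j}))) / N"
    unfolding N_def by (rule integral_pmf_of_set[OF neP fP])
  have "c * ((\<Sum>\<sigma>\<in>P. real (rk I (e ` \<sigma> ` {1..j}))) / N) = (c * (\<Sum>\<sigma>\<in>P. real (rk I (e ` \<sigma> ` {1..j})))) / N"
    by simp
  also have "\<dots> \<le> (\<Sum>\<sigma>\<in>P. real (rk ?PM (e ` \<sigma> ` {1..j}))) / N"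
    using main Npos by (intro divide_right_mono) auto
  finally have fin: "c * ((\<Sum>\<sigma>\<in>P. real (rk I (e ` \<sigma> ` {1..j}))) / N) \<le> (\<Sum>\<sigma>\<in>P. real (rk ?PM (e ` \<sigma> ` {1..j}))) / N" .
  show ?thesis unfolding RI P_def[symmetric] c_def[symmetric] EM EP using fin by simp
qed

end
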